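(* Let $n \ge 1$ and $t \ge 0$ be integers. If there is a $t$-resilient asynchronous message-passing protocol solving the colored cross-blockchain transaction task $(\mathcal{I}, \mathcal{O}, \Delta)$ on $n+1$ blockchains, then there is a $t$-resilient asynchronous message-passing protocol solving the colorless cross-blockchain transaction task $(\mathcal{I}, \mathcal{O}', \Xi)$ on $n+1$ blockchains. Both tasks are defined in the context.
   Context: Setting. There are $n+1$ distinct blockchains $C_0,\dots,C_n$. An $(n+1)$-party cross-blockchain transaction touches exactly one block $v_i$ on each blockchain $C_i$. Input complex $\mathcal{I}$. The vertices are the pairs $(v_i, a)$ with $0 \le i \le n$ and $a \in \{0,1,\bot\}$. Here $0$ means not committed, $1$ means committed, and $\bot$ means the block's branch was suspended by a fork. A nonempty set of vertices is a simplex if and only if its vertices involve pairwise distinct blocks. Colored output complex $\mathcal{O}$. The vertices are the pairs $(v_i, b)$ with $b \in \{0,1\}$, where $1$ means committed and $0$ means aborted. A nonempty set of vertices is a simplex if and only if its vertices involve pairwise distinct blocks and all carry the same value $b$. Hence $\mathcal{O}$ has two connected components. Colored carrier map $\Delta$. For a simplex $\sigma$ of $\mathcal{I}$ with block set $B(\sigma)$: - $\Delta(\sigma)$ is the simplex $\{(v,1) : v \in B(\sigma)\}$ together with its faces, if all input values in $\sigma$ are $1$; - it is $\{(v,0) : v \in B(\sigma)\}$ together with its faces, if some input value in $\sigma$ is $\bot$; - otherwise it is the subcomplex of $\mathcal{O}$ consisting of all simplices whose blocks lie in $B(\sigma)$, i.e. both the all-$0$ and the all-$1$ simplices on $B(\sigma)$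 and their faces. Colorless task. The colorless output complex $\mathcal{O}'$ has vertices $0$ and $1$ and only the simplices $\{0\}$ and $\{1\}$. The colorless carrier map is obtained from $\Delta$ by forgetting block identities: - $\Xi(\sigma)=\{1\}$ if all input values in $\sigma$ are $1$; - $\Xi(\sigma)=\{0\}$ if some input value in $\sigma$ is $\bot$; - $\Xi(\sigma)=\mathcal{O}'$ otherwise. Computational model. There are $n+1$ processes (process $i$ corresponds to blockchain $C_i$) communicating by asynchronous message passing, with at most $t$ crash failures. Process $i$ starts with an input vertex $(v_i,a_i)$ of $\mathcal{I}$. - A protocol solves the colored task if in every execution with at most $t$ crashes each non-crashed process $i$ eventually decides an output vertex $(v_i,b_i)$ of $\mathcal{O}$, and the set of decided vertices is a simplex of $\Delta(\sigma)$, where $\sigma$ is the simplex of inputs of the participating processes. - A protocol solves the colorless task if each non-crashed process eventually decides a value in $\{0,1\}$, and the set of decided values is a simplex of $\Xi(\sigma)$. *)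

theory Defs
  imports Main "HOL-Library.Multiset"
begin

text \<open>Input values: 0 = not committed, 1 = committed, Bot = suspended by a fork.\<close>
datatype inval = Zero | One | Bot

text \<open>Simplices of the input complex: nonempty finite sets of vertices (block, value)
  involving pairwise distinct blocks.\<close>
definition input_simplex :: "('v \<times> inval) set \<Rightarrow> bool" where
  "input_simplex \<sigma> \<longleftrightarrow> finite \<sigma> \<and> \<sigma> \<noteq> {} \<and> inj_on fst \<sigma>"

text \<open>Simplices of the colored output complex: pairwise distinct blocks, all carrying the
  same value (True = committed, False = aborted).\<close>
definition output_simplex :: "('v \<times> bool) set \<Rightarrow> bool" where
  "output_simplex \<tau> \<longleftrightarrow> finite \<tau> \<and> \<tau> \<noteq> {} \<and> inj_on fst \<tau> \<and> (\<exists>b. \<forall>x\<in>\<tau>. snd x = b)"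

definition blocks :: "('v \<times> 'a) set \<Rightarrow> 'v set" where
  "blocks \<sigma> = fst ` \<sigma>"

definition Delta :: "('v \<times> inval) set \<Rightarrow> ('v \<times> bool) set set" where
  "Delta \<sigma> =
    (if \<forall>x\<in>\<sigma>. snd x = One then
       {\<tau>. \<tau> \<noteq> {} \<and> \<tau> \<subseteq> {(v, True) | v. v \<in> blocks \<sigma>}}
     else if \<exists>x\<in>\<sigma>. snd x = Bot then
       {\<tau>. \<tau> \<noteq> {} \<and> \<tau> \<subseteq> {(v, False) | v. v \<in> blocks \<sigma>}}
     else {\<tau>. output_simplex \<tau> \<and> blocks \<tau> \<subseteq> blocks \<sigma>})"

text \<open>Colorless carrier map: output complex O' has vertices 0,1 (False, True) and simplices
  {0},{1} only.\<close>
definition Xi :: "('v \<times> inval) set \<Rightarrow> bool set set" where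
  "Xi \<sigma> =
    (if \<forall>x\<in>\<sigma>. snd x = One then {{True}}
     else if \<exists>x\<in>\<sigma>. snd x = Bot then {{False}}
     else {{True}, {False}})"

text \<open>A protocol for processes 0..n: initial local state from process id and input; a
  step of process p takes its local state and optionally one received message
  (sender, payload) and returns a new local state and a list of messages
  (destination, payload) to send; the decision map reads the (possibly absent)
  decision off the local state.\<close>
record ('i, 's, 'm, 'o) protocol =
  pinit :: "nat \<Rightarrow> 'i \<Rightarrow> 's"
  ptrans :: "nat \<Rightarrow> 's \<Rightarrow> (nat \<times> 'm) option \<Rightarrow> 's \<times> (nat \<times> 'm) list"
  pdec :: "'s \<Rightarrow> 'o option"

text \<open>Configuration: local states and the multiset of messages in transit
  (sender, destination, payload).\<close>
type_synonym ('s, 'm) config = "(nat \<Rightarrow> 's) \<times> (nat \<times> nat \<times> 'm) multiset"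

text \<open>Events: None = no step; Some (p, r) = process p takes a step, receiving r
  (either nothing or an in-transit message addressed to p).\<close>
type_synonym 'm event = "(nat \<times> (nat \<times> nat \<times> 'm) option) option"

definition step_ok ::
  "('i, 's, 'm, 'o, 'z) protocol_scheme \<Rightarrow> nat \<Rightarrow> ('s, 'm) config \<Rightarrow> 'm event
     \<Rightarrow> ('s, 'm) config \<Rightarrow> bool" where
  "step_ok P n c ev c' \<longleftrightarrow>
    (case ev of
       None \<Rightarrow> c' = c
     | Some (p, r) \<Rightarrow>
         p \<le> n \<and>
         (case r of None \<Rightarrow> True | Some e \<Rightarrow> e \<in># snd c \<and> fst (snd e) = p) \<and>
         (let res = ptrans P p (fst c p) (map_option (\<lambda>(s, d, m). (s, m)) r) in
           c' = ((fst c)(p := fst res),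
                 (snd c - (case r of None \<Rightarrow> {#} | Some e \<Rightarrow> {#e#}))
                   + mset (map (\<lambda>(d, m). (p, d, m)) (snd res)))))"

definition run ::
  "('i, 's, 'm, 'o, 'z) protocol_scheme \<Rightarrow> nat \<Rightarrow> (nat \<Rightarrow> 'i)
     \<Rightarrow> (nat \<Rightarrow> ('s, 'm) config) \<Rightarrow> (nat \<Rightarrow> 'm event) \<Rightarrow> bool" where
  "run P n x C ev \<longleftrightarrow>
    C 0 = ((\<lambda>i. pinit P i (x i)), {#}) \<and> (\<forall>k. step_ok P n (C k) (ev k) (C (Suc k)))"

definition steps_of :: "(nat \<Rightarrow> 'm event) \<Rightarrow> nat \<Rightarrow> nat set" where
  "steps_of ev p = {k. \<exists>r. ev k = Some (p, r)}"

text \<open>A process is correct (non-crashed) iff it takes infinitely many steps.\<close>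
definition correct :: "(nat \<Rightarrow> 'm event) \<Rightarrow> nat \<Rightarrow> bool" where
  "correct ev p \<longleftrightarrow> infinite (steps_of ev p)"

definition admissible ::
  "nat \<Rightarrow> nat \<Rightarrow> (nat \<Rightarrow> ('s, 'm) config) \<Rightarrow> (nat \<Rightarrow> 'm event) \<Rightarrow> bool" where
  "admissible n t C ev \<longleftrightarrow>
    card {p \<in> {0..n}. \<not> correct ev p} \<le> t \<and>
    (\<forall>k e. e \<in># snd (C k) \<longrightarrow> fst (snd e) \<le> n \<longrightarrow> correct ev (fst (snd e)) \<longrightarrow>
       (\<exists>k'\<ge>k. ev k' = Some (fst (snd e), Some e)))"

definition decided ::
  "('i, 's, 'm, 'o, 'z) protocol_scheme \<Rightarrow> (nat \<Rightarrow> ('s, 'm) config) \<Rightarrow> nat \<Rightarrow> 'o \<Rightarrow> bool" where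
  "decided P C i b \<longleftrightarrow> (\<exists>k. pdec P (fst (C k) i) = Some b)"

definition solves ::
  "('i, 's, 'm, 'o) protocol \<Rightarrow> nat \<Rightarrow> nat \<Rightarrow> (nat \<Rightarrow> 'i) set
     \<Rightarrow> ((nat \<Rightarrow> 'i) \<Rightarrow> (nat \<times> 'o) set \<Rightarrow> bool) \<Rightarrow> bool" where
  "solves P n t Inputs Valid \<longleftrightarrow>
    (\<forall>x \<in> Inputs. \<forall>C ev. run P n x C ev \<and> admissible n t C ev \<longrightarrow>
       (\<forall>i\<le>n. correct ev i \<longrightarrow> (\<exists>b. decided P C i b)) \<and>
       (\<forall>i\<le>n. \<forall>k k' b. k \<le> k' \<longrightarrow> pdec P (fst (C k) i) = Some b
                         \<longrightarrow> pdec P (fst (C k') i) = Some b) \<and>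
       Valid x {(i, b). i \<le> n \<and> decided P C i b})"

definition tx_inputs :: "nat \<Rightarrow> (nat \<Rightarrow> 'v \<times> inval) set" where
  "tx_inputs n = {x. inj_on (fst \<circ> x) {0..n}}"

definition input_of :: "nat \<Rightarrow> (nat \<Rightarrow> 'v \<times> inval) \<Rightarrow> ('v \<times> inval) set" where
  "input_of n x = x ` {0..n}"

definition colored_valid ::
  "nat \<Rightarrow> (nat \<Rightarrow> 'v \<times> inval) \<Rightarrow> (nat \<times> ('v \<times> bool)) set \<Rightarrow> bool" where
  "colored_valid n x D \<longleftrightarrow>
    (\<forall>(i, w) \<in> D. fst w = fst (x i)) \<and>
    (snd ` D \<noteq> {} \<longrightarrow> snd ` D \<in> Delta (input_of n x))"

definition colorless_valid ::
  "nat \<Rightarrow> (nat \<Rightarrow> 'v \<times> inval) \<Rightarrow> (nat \<times> bool) set \<Rightarrow> bool" where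
  "colorless_valid n x D \<longleftrightarrow>
    (snd ` D \<noteq> {} \<longrightarrow> snd ` D \<in> Xi (input_of n x))"

definition solves_colored :: "('v \<times> inval, 's, 'm, 'v \<times> bool) protocol \<Rightarrow> nat \<Rightarrow> nat \<Rightarrow> bool" where
  "solves_colored P n t \<longleftrightarrow> solves P n t (tx_inputs n) (colored_valid n)"

definition solves_colorless :: "('v \<times> inval, 's, 'm, bool) protocol \<Rightarrow> nat \<Rightarrow> nat \<Rightarrow> bool" where
  "solves_colorless P n t \<longleftrightarrow> solves P n t (tx_inputs n) (colorless_valid n)"

end

theory Submission
  imports Defs
begin

lemma Delta_Xi:
  assumes "\<tau> \<noteq> {}" "\<tau> \<in> Delta \<sigma>"
  shows "snd ` \<tau> \<in> Xi \<sigma>"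
proof (cases "\<forall>x\<in>\<sigma>. snd x = One")
  case True
  then have "\<tau> \<subseteq> {(v, True) | v. v \<in> blocks \<sigma>}" using assms by (simp add: Delta_def)
  then have "snd ` \<tau> = {True}" using assms(1) by force
  then show ?thesis using True by (simp add: Xi_def)
next
  case F1: False
  show ?thesis
  proof (cases "\<exists>x\<in>\<sigma>. snd x = Bot")
    case True
    then have "\<tau> \<subseteq> {(v, False) | v. v \<in> blocks \<sigma>}" using assms F1 by (simp add: Delta_def)
    then have "snd ` \<tau> = {False}" using assms(1) by force
    then show ?thesis using True F1 by (simp add: Xi_def)
  next
    case False
    then have "output_simplex \<tau>" using assms F1 by (simp add: Delta_def)
    then obtain b where b: "\<forall>x\<in>\<tau>. snd x = b" by (auto simp: output_simplex_def)
    then have "snd ` \<tau> = {b}" using assms(1) by force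
    then show ?thesis using False F1 by (cases b) (simp_all add: Xi_def)
  qed
qed

theorem lemma3:
  fixes n t :: nat
    and P :: "('v \<times> inval, 's, 'm, 'v \<times> bool) protocol"
  assumes "n \<ge> 1"
    and "solves_colored P n t"
  shows "\<exists>Q :: ('v \<times> inval, 's, 'm, bool) protocol. solves_colorless Q n t"
proof -
  define Q :: "('v \<times> inval, 's, 'm, bool) protocol" where
    "Q = \<lparr>pinit = pinit P, ptrans = ptrans P, pdec = (\<lambda>s. map_option snd (pdec P s))\<rparr>"
  have runQ: "run Q n x C ev = run P n x C ev" for x C ev
  proof -
    have e: "ptrans Q = ptrans P" "pinit Q = pinit P" by (simp_all add: Q_def)
    show ?thesis unfolding run_def step_ok_def e by (rule refl)
  qed
  have decQ: "decided Q C i b = (\<exists>w. decided P C i w \<and> snd w = b)" for C i b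
    by (auto simp: Q_def decided_def)
  have "solves_colorless Q n t"
    unfolding solves_colorless_def solves_def
  proof (rule ballI, intro allI impI)
    fix x C ev
    assume x: "x \<in> tx_inputs n" and re: "run Q n x C ev \<and> admissible n t C ev"
    have H: "(\<forall>i\<le>n. correct ev i \<longrightarrow> (\<exists>b. decided P C i b)) \<and>
       (\<forall>i\<le>n. \<forall>k k' b. k \<le> k' \<longrightarrow> pdec P (fst (C k) i) = Some b
                         \<longrightarrow> pdec P (fst (C k') i) = Some b) \<and>
       colored_valid n x {(i, b). i \<le> n \<and> decided P C i b}"
    proof -
      have S: "solves P n t (tx_inputs n) (colored_valid n)"
        using assms(2) by (simp add: solves_colored_def)
      have r: "run P n x C ev \<and> admissible n t C ev" using re runQ by simp
      show ?thesis using S[unfolded solves_def, rule_format, OF x r] by blast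
    qed
    have g1: "\<forall>i\<le>n. correct ev i \<longrightarrow> (\<exists>b. decided Q C i b)"
      using H decQ by blast
    have g2: "\<forall>i\<le>n. \<forall>k k' b. k \<le> k' \<longrightarrow> pdec Q (fst (C k) i) = Some b
                         \<longrightarrow> pdec Q (fst (C k') i) = Some b"
    proof (intro allI impI)
      fix i k k' b
      assume i: "i \<le> n" and kk: "k \<le> k'" and d: "pdec Q (fst (C k) i) = Some b"
      have pQ: "pdec Q s = map_option snd (pdec P s)" for s by (simp add: Q_def)
      from d obtain w where w: "pdec P (fst (C k) i) = Some w" "snd w = b"
        unfolding pQ by blast
      have "pdec P (fst (C k') i) = Some w" using H i kk w(1) by blast
      then show "pdec Q (fst (C k') i) = Some b" unfolding pQ using w(2) by simp
    qed
    let ?DP = "{(i, b). i \<le> n \<and> decided P C i b}"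
    let ?DQ = "{(i, b). i \<le> n \<and> decided Q C i b}"
    have eq: "snd ` ?DQ = snd ` snd ` ?DP"
    proof
      show "snd ` ?DQ \<subseteq> snd ` snd ` ?DP"
      proof
        fix b assume "b \<in> snd ` ?DQ"
        then obtain i where "i \<le> n" "decided Q C i b" by auto
        then obtain w where "decided P C i w" "snd w = b" using decQ by blast
        then have "(i, w) \<in> ?DP" using \<open>i \<le> n\<close> by blast
        then have "w \<in> snd ` ?DP" by (rule rev_image_eqI) simp
        then show "b \<in> snd ` snd ` ?DP" by (rule rev_image_eqI) (use \<open>snd w = b\<close> in simp)
      qed
      show "snd ` snd ` ?DP \<subseteq> snd ` ?DQ"
      proof
        fix b assume "b \<in> snd ` snd ` ?DP"
        then obtain i w where "i \<le> n" "decided P C i w" "snd w = b" by auto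
        then have "decided Q C i b" using decQ by blast
        then have "(i, b) \<in> ?DQ" using \<open>i \<le> n\<close> by blast
        then show "b \<in> snd ` ?DQ" by (rule rev_image_eqI) simp
      qed
    qed
    have g3: "colorless_valid n x ?DQ"
      unfolding colorless_valid_def
    proof
      assume "snd ` ?DQ \<noteq> {}"
      then have ne: "snd ` ?DP \<noteq> {}" using eq by auto
      then have "snd ` ?DP \<in> Delta (input_of n x)" using H by (simp add: colored_valid_def)
      then show "snd ` ?DQ \<in> Xi (input_of n x)" using Delta_Xi[OF ne] eq by simp
    qed
    show "(\<forall>i\<le>n. correct ev i \<longrightarrow> (\<exists>b. decided Q C i b)) \<and>
       (\<forall>i\<le>n. \<forall>k k' b. k \<le> k' \<longrightarrow> pdec Q (fst (C k) i) = Some b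
                         \<longrightarrow> pdec Q (fst (C k') i) = Some b) \<and>
       colorless_valid n x ?DQ" using g1 g2 g3 by blast
  qed
  then show ?thesis by blast
qed

end
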